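(* Let $p>1$, $N\ge m$, and fix $\eta>0$. For almost all $(A,y)\in\mathbb R^{m\times N}\times\mathbb R^m$ such that $y\in R(A)$ and $\eta<\min_{Ax=y}\|x\|_p$, the unique optimal solution $x^*$ of $\min_{x\in\mathbb R^N}\|Ax-y\|_2$ subject to $\|x\|_p\le\eta$ satisfies $|\mathrm{supp}(x^* )|=N$.
   Context: $\|x\|_p:=(\sum_i|x_i|^p)^{1/p}$; $\mathrm{supp}(x)=\{i:x_i\ne0\}$; $R(A)$ is the range of $A$. "For almost all" means outside a set of Lebesgue measure zero. *)

theory Defs
  imports "HOL-Analysis.Analysis"
begin

definition pnorm :: "real \<Rightarrow> real ^ 'n \<Rightarrow> real" where
  "pnorm p x = (\<Sum>i\<in>UNIV. \<bar>x $ i\<bar> powr p) powr (1 / p)"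

definition supp :: "real ^ 'n \<Rightarrow> 'n set" where
  "supp x = {i. x $ i \<noteq> 0}"

definition constr_opt :: "real \<Rightarrow> real \<Rightarrow> real ^ 'n ^ 'm \<Rightarrow> real ^ 'm \<Rightarrow> real ^ 'n \<Rightarrow> bool" where
  "constr_opt p \<eta> A y x \<longleftrightarrow> pnorm p x \<le> \<eta> \<and>
     (\<forall>z. pnorm p z \<le> \<eta> \<longrightarrow> norm (A *v x - y) \<le> norm (A *v z - y))"

end

theory Submission
  imports Defs
begin


lemma powr_mvt_step:
  fixes p u m :: real
  assumes "p > 1" "0 \<le> u" "u < m"
  shows "\<exists>z. u < z \<and> z < m \<and> m powr p - u powr p = (m - u) * (p * z powr (p - 1))"
proof -
  have c: "continuous_on {u..m} (\<lambda>t. t powr p)"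
    using assms by (intro continuous_on_powr') (auto intro: continuous_intros)
  have d: "\<And>x. u < x \<Longrightarrow> x < m \<Longrightarrow> (\<lambda>t. t powr p) differentiable (at x)"
  proof -
    fix x assume "u < x" "x < m"
    then have "DERIV (\<lambda>t. t powr p) x :> p * x powr (p - 1)"
      using assms by (intro has_real_derivative_powr) auto
    then show "(\<lambda>t. t powr p) differentiable (at x)"
      using real_differentiable_def by blast
  qed
  obtain l z where z: "u < z" "z < m" "DERIV (\<lambda>t. t powr p) z :> l" "m powr p - u powr p = (m - u) * l"
    using MVT[OF assms(3) c d] by blast
  have "DERIV (\<lambda>t. t powr p) z :> p * z powr (p - 1)"
    using z assms by (intro has_real_derivative_powr) auto
  with z(3) have "l = p * z powr (p - 1)" using DERIV_unique by blast
  with z show ?thesis by blast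
qed

lemma powr_strict_mid:
  fixes p u v :: real
  assumes "p > 1" "0 \<le> u" "u < v"
  shows "((u + v) / 2) powr p < (u powr p + v powr p) / 2"
proof -
  define m where "m = (u + v) / 2"
  have um: "u < m" "m < v" using assms by (auto simp: m_def)
  obtain z1 where z1: "u < z1" "z1 < m" "m powr p - u powr p = (m - u) * (p * z1 powr (p - 1))"
    using powr_mvt_step[OF assms(1,2) um(1)] by blast
  obtain z2 where z2: "m < z2" "z2 < v" "v powr p - m powr p = (v - m) * (p * z2 powr (p - 1))"
    using powr_mvt_step[OF assms(1) _ um(2)] um assms by fastforce
  have "z1 powr (p - 1) < z2 powr (p - 1)"
    using z1 z2 assms by (intro powr_less_mono2) auto
  then have "p * z1 powr (p - 1) < p * z2 powr (p - 1)" using assms by simp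
  moreover have "m - u = v - m" "m - u > 0" using um by (auto simp: m_def field_simps)
  ultimately have "(m - u) * (p * z1 powr (p - 1)) < (v - m) * (p * z2 powr (p - 1))"
    by (metis mult_strict_left_mono)
  with z1 z2 have "m powr p - u powr p < v powr p - m powr p" by linarith
  then show ?thesis by (simp add: m_def)
qed

lemma abs_powr_mid:
  fixes p a b :: real
  assumes "p > 1"
  shows "\<bar>(a + b) / 2\<bar> powr p \<le> (\<bar>a\<bar> powr p + \<bar>b\<bar> powr p) / 2"
    and "a \<noteq> b \<Longrightarrow> \<bar>(a + b) / 2\<bar> powr p < (\<bar>a\<bar> powr p + \<bar>b\<bar> powr p) / 2"
proof -
  have le1: "\<bar>(a + b) / 2\<bar> powr p \<le> ((\<bar>a\<bar> + \<bar>b\<bar>) / 2) powr p"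
    using assms by (intro powr_mono2) auto
  have gen: "((\<bar>a\<bar> + \<bar>b\<bar>) / 2) powr p \<le> (\<bar>a\<bar> powr p + \<bar>b\<bar> powr p) / 2"
  proof (cases "\<bar>a\<bar> = \<bar>b\<bar>")
    case True then show ?thesis by simp
  next
    case False
    then consider "\<bar>a\<bar> < \<bar>b\<bar>" | "\<bar>b\<bar> < \<bar>a\<bar>" by linarith
    then show ?thesis
    proof cases
      case 1 then show ?thesis using powr_strict_mid[OF assms, of "\<bar>a\<bar>" "\<bar>b\<bar>"] by simp
    next
      case 2 then show ?thesis using powr_strict_mid[OF assms, of "\<bar>b\<bar>" "\<bar>a\<bar>"] by (simp add: add.commute)
    qed
  qed
  show "\<bar>(a + b) / 2\<bar> powr p \<le> (\<bar>a\<bar> powr p + \<bar>b\<bar> powr p) / 2"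
    using le1 gen by linarith
  assume ab: "a \<noteq> b"
  show "\<bar>(a + b) / 2\<bar> powr p < (\<bar>a\<bar> powr p + \<bar>b\<bar> powr p) / 2"
  proof (cases "\<bar>a\<bar> = \<bar>b\<bar>")
    case True
    with ab have "b = - a" "a \<noteq> 0" by (auto simp: abs_eq_iff)
    then show ?thesis using True by simp
  next
    case False
    then consider "\<bar>a\<bar> < \<bar>b\<bar>" | "\<bar>b\<bar> < \<bar>a\<bar>" by linarith
    then have "((\<bar>a\<bar> + \<bar>b\<bar>) / 2) powr p < (\<bar>a\<bar> powr p + \<bar>b\<bar> powr p) / 2"
    proof cases
      case 1 then show ?thesis using powr_strict_mid[OF assms, of "\<bar>a\<bar>" "\<bar>b\<bar>"] by simp
    next
      case 2 then show ?thesis using powr_strict_mid[OF assms, of "\<bar>b\<bar>" "\<bar>a\<bar>"] by (simp add: add.commute)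
    qed
    with le1 show ?thesis by linarith
  qed
qed



definition psum :: "real \<Rightarrow> real ^ 'n \<Rightarrow> real" where
  "psum p x = (\<Sum>i\<in>UNIV. \<bar>x $ i\<bar> powr p)"

lemma psum_nonneg: "psum p x \<ge> 0"
  unfolding psum_def by (intro sum_nonneg) auto

lemma pnorm_le_iff:
  assumes "p > 0" "\<eta> > 0"
  shows "pnorm p x \<le> \<eta> \<longleftrightarrow> psum p x \<le> \<eta> powr p"
proof -
  have pn: "pnorm p x = psum p x powr (1/p)" by (simp add: pnorm_def psum_def)
  have s: "psum p x \<ge> 0" by (rule psum_nonneg)
  show ?thesis
  proof
    assume "pnorm p x \<le> \<eta>"
    then have "(psum p x powr (1/p)) powr p \<le> \<eta> powr p"
      using assms pn by (intro powr_mono2) auto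
    also have "(psum p x powr (1/p)) powr p = psum p x"
      using s assms by (simp add: powr_powr)
    finally show "psum p x \<le> \<eta> powr p" .
  next
    assume "psum p x \<le> \<eta> powr p"
    then have "psum p x powr (1/p) \<le> (\<eta> powr p) powr (1/p)"
      using assms s by (intro powr_mono2) auto
    also have "(\<eta> powr p) powr (1/p) = \<eta>" using assms by (simp add: powr_powr)
    finally show "pnorm p x \<le> \<eta>" using pn by simp
  qed
qed

lemma continuous_psum:
  assumes "p > 0"
  shows "continuous_on S (psum p)"
  unfolding psum_def
  using assms by (intro continuous_on_sum continuous_on_powr' continuous_on_const
      continuous_on_rabs continuous_on_component continuous_on_id) auto

lemma compact_psum_ball:
  assumes "p > 0"
  shows "compact {x :: real ^ 'n. psum p x \<le> E}"
proof -
  have cl: "closed {x :: real ^ 'n. psum p x \<le> E}"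
    using continuous_psum[OF assms, of UNIV] by (intro closed_Collect_le) (auto intro: continuous_intros)
  have "\<bar>x $ i\<bar> \<le> E powr (1/p)" if "psum p x \<le> E" for x :: "real ^ 'n" and i
  proof -
    have "\<bar>x $ i\<bar> powr p \<le> psum p x"
      unfolding psum_def by (rule member_le_sum) auto
    with that have h: "\<bar>x $ i\<bar> powr p \<le> E" by linarith
    then have E0: "E \<ge> 0" by (meson order_trans powr_ge_zero)
    have "(\<bar>x $ i\<bar> powr p) powr (1/p) \<le> E powr (1/p)"
      using h assms by (intro powr_mono2) auto
    then show ?thesis using assms by (simp add: powr_powr)
  qed
  then have "norm x \<le> real CARD('n) * E powr (1/p)" if "psum p x \<le> E" for x :: "real ^ 'n"
  proof -
    have "norm x \<le> (\<Sum>i\<in>UNIV. \<bar>x $ i\<bar>)" by (rule norm_le_l1_cart)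
    also have "\<dots> \<le> (\<Sum>i\<in>(UNIV::'n set). E powr (1/p))"
      using that \<open>\<And>x i. psum p x \<le> E \<Longrightarrow> \<bar>x $ i\<bar> \<le> E powr (1/p)\<close> by (intro sum_mono) auto
    finally show ?thesis by simp
  qed
  then have "bounded {x :: real ^ 'n. psum p x \<le> E}"
    unfolding bounded_iff by blast
  with cl show ?thesis using compact_eq_bounded_closed by blast
qed

lemma psum_mid:
  assumes "p > 1"
  shows "psum p ((1/2) *\<^sub>R (x + z)) \<le> (psum p x + psum p z) / 2"
    and "x \<noteq> z \<Longrightarrow> psum p ((1/2) *\<^sub>R (x + z)) < (psum p x + psum p z) / 2"
proof -
  have eq: "(psum p x + psum p z) / 2 = (\<Sum>i\<in>UNIV. (\<bar>x $ i\<bar> powr p + \<bar>z $ i\<bar> powr p) / 2)"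
    by (simp add: psum_def sum.distrib sum_divide_distrib[symmetric])
  have l: "psum p ((1/2) *\<^sub>R (x + z)) = (\<Sum>i\<in>UNIV. \<bar>(x $ i + z $ i) / 2\<bar> powr p)"
    by (simp add: psum_def)
  show "psum p ((1/2) *\<^sub>R (x + z)) \<le> (psum p x + psum p z) / 2"
    unfolding eq l by (intro sum_mono abs_powr_mid(1)[OF assms])
  assume "x \<noteq> z"
  then obtain i where i: "x $ i \<noteq> z $ i" by (metis vec_eq_iff)
  show "psum p ((1/2) *\<^sub>R (x + z)) < (psum p x + psum p z) / 2"
    unfolding eq l
    using abs_powr_mid(1)[OF assms] abs_powr_mid(2)[OF assms i]
    by (intro sum_strict_mono_ex1) auto
qed

lemma psum_scale:
  assumes "s \<ge> 0"
  shows "psum p (s *\<^sub>R x) = s powr p * psum p x"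
  unfolding psum_def using assms
  by (simp add: sum_distrib_left abs_mult powr_mult)

lemma psum_add_axis:
  assumes "x $ i = 0"
  shows "psum p (x + t *\<^sub>R axis i 1) = psum p x + \<bar>t\<bar> powr p"
proof -
  have "\<bar>(x + t *\<^sub>R axis i 1) $ j\<bar> powr p = \<bar>x $ j\<bar> powr p + (if j = i then \<bar>t\<bar> powr p else 0)" for j
    using assms by (auto simp: axis_def)
  then show ?thesis unfolding psum_def by (simp add: sum.distrib)
qed



lemma res_unique:
  fixes A :: "real^'n^'m"
  assumes mid: "\<And>x z. x \<in> Q \<Longrightarrow> z \<in> Q \<Longrightarrow> (1/2) *\<^sub>R (x + z) \<in> Q"
    and x1: "x1 \<in> Q" and x2: "x2 \<in> Q"
    and o1: "\<forall>z\<in>Q. norm (A *v x1 - y) \<le> norm (A *v z - y)"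
    and o2: "\<forall>z\<in>Q. norm (A *v x2 - y) \<le> norm (A *v z - y)"
  shows "A *v x1 = A *v x2"
proof -
  define u where "u = A *v x1 - y"
  define v where "v = A *v x2 - y"
  have uv: "norm u = norm v" using o1 o2 x1 x2 unfolding u_def v_def by (meson antisym)
  have "A *v ((1/2) *\<^sub>R (x1 + x2)) - y = (1/2) *\<^sub>R (u + v)"
    unfolding u_def v_def by (simp add: matrix_vector_mult_scaleR matrix_vector_right_distrib vec_eq_iff field_simps)
  then have "norm u \<le> norm ((1/2) *\<^sub>R (u + v))"
    using o1 mid[OF x1 x2] unfolding u_def by metis
  then have h: "2 * norm u \<le> norm (u + v)" by simp
  have pl: "(norm (u + v))\<^sup>2 + (norm (u - v))\<^sup>2 = 2 * (norm u)\<^sup>2 + 2 * (norm v)\<^sup>2"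
    by (simp add: power2_norm_eq_inner inner_add_left inner_add_right inner_diff_left inner_diff_right inner_commute)
  have "(2 * norm u)\<^sup>2 \<le> (norm (u + v))\<^sup>2"
    using h by (intro power_mono) auto
  then have "(norm (u - v))\<^sup>2 \<le> 0" using pl uv by (simp add: power2_eq_square)
  then have "u = v" by simp
  then show ?thesis unfolding u_def v_def by simp
qed

lemma boundary:
  fixes A :: "real^'n^'m"
  assumes p: "p > 0" and x0: "y = A *v x0" and lt: "psum p x < E"
    and opt: "\<forall>z. psum p z \<le> E \<longrightarrow> norm (A *v x - y) \<le> norm (A *v z - y)"
    and ne: "A *v x \<noteq> y"
  shows False
proof -
  have ic: "isCont (psum p) z" for z :: "real^'n"
    using continuous_psum[OF p, of UNIV] by (metis continuous_on_eq_continuous_at open_UNIV UNIV_I)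
  have "((\<lambda>t. x + t *\<^sub>R (x0 - x)) \<longlongrightarrow> x + 0 *\<^sub>R (x0 - x)) (at_right (0::real))"
    by (intro tendsto_intros)
  then have "((\<lambda>t. psum p (x + t *\<^sub>R (x0 - x))) \<longlongrightarrow> psum p x) (at_right (0::real))"
    using isCont_tendsto_compose[OF ic] by simp
  then have ev1: "eventually (\<lambda>t. psum p (x + t *\<^sub>R (x0 - x)) < E) (at_right (0::real))"
    using lt by (rule order_tendstoD)
  have ev2: "eventually (\<lambda>t. 0 < t \<and> t < 1) (at_right (0::real))"
    by (simp add: eventually_at_right_field) (rule exI[of _ 1], auto)
  obtain t where t: "psum p (x + t *\<^sub>R (x0 - x)) < E" "0 < t" "t < 1"
    using eventually_happens'[OF _ eventually_conj[OF ev1 ev2]] by auto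
  have "A *v (x + t *\<^sub>R (x0 - x)) - y = (1 - t) *\<^sub>R (A *v x - y)"
    using x0 by (simp add: matrix_vector_mult_scaleR matrix_vector_right_distrib
        matrix_vector_mult_diff_distrib algebra_simps)
  then have "norm (A *v (x + t *\<^sub>R (x0 - x)) - y) = (1 - t) * norm (A *v x - y)"
    using t by simp
  also have "\<dots> < norm (A *v x - y)" using t ne by simp
  moreover have "norm (A *v x - y) \<le> norm (A *v (x + t *\<^sub>R (x0 - x)) - y)"
    using opt t(1) by simp
  ultimately show False by linarith
qed



lemma key_ineq:
  fixes c \<tau> \<delta> \<epsilon> E R B a :: real
  assumes "c > 0" "\<tau> > 0" "\<delta> \<ge> 0" "\<delta> \<le> \<tau> * \<epsilon> / E" "\<tau> \<le> \<epsilon>" "\<epsilon> \<le> 1" "E > 0"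
    "R \<ge> 0" "B \<ge> 0" "a \<ge> 0" "\<epsilon> * (2 * R * B / E + (a + B / E)\<^sup>2) \<le> c"
  shows "- 2 * \<tau> * c + 2 * \<delta> * R * B + (\<tau> * a + \<delta> * B)\<^sup>2 < 0"
proof -
  have d1: "\<delta> * B \<le> \<tau> * (B / E)"
  proof -
    have "\<delta> * B \<le> (\<tau> * \<epsilon> / E) * B" using assms by (intro mult_right_mono) auto
    also have "\<dots> \<le> (\<tau> / E) * B" using assms by (intro mult_right_mono divide_right_mono) (auto simp: mult_left_le)
    finally show ?thesis by simp
  qed
  have s1: "0 \<le> \<tau> * a + \<delta> * B" using assms by auto
  have "\<tau> * a + \<delta> * B \<le> \<tau> * (a + B / E)" using d1 by (simp add: algebra_simps)
  then have q: "(\<tau> * a + \<delta> * B)\<^sup>2 \<le> (\<tau> * (a + B / E))\<^sup>2" using s1 by (intro power_mono) auto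
  have "(\<tau> * (a + B / E))\<^sup>2 = \<tau> * (\<tau> * (a + B / E)\<^sup>2)" by (simp add: power2_eq_square)
  also have "\<dots> \<le> \<tau> * (\<epsilon> * (a + B / E)\<^sup>2)"
    using assms by (intro mult_left_mono mult_right_mono) auto
  finally have q2: "(\<tau> * a + \<delta> * B)\<^sup>2 \<le> \<tau> * (\<epsilon> * (a + B / E)\<^sup>2)" using q by linarith
  have "2 * \<delta> * R * B \<le> 2 * (\<tau> * \<epsilon> / E) * R * B"
    using assms by (intro mult_right_mono) auto
  also have "\<dots> = \<tau> * (\<epsilon> * (2 * R * B / E))" by simp
  finally have q3: "2 * \<delta> * R * B \<le> \<tau> * (\<epsilon> * (2 * R * B / E))" .
  have "\<tau> * (\<epsilon> * (2 * R * B / E)) + \<tau> * (\<epsilon> * (a + B / E)\<^sup>2) = \<tau> * (\<epsilon> * (2 * R * B / E + (a + B / E)\<^sup>2))"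
    by (simp add: algebra_simps)
  also have "\<dots> \<le> \<tau> * c" using assms by (intro mult_left_mono) auto
  finally have "2 * \<delta> * R * B + (\<tau> * a + \<delta> * B)\<^sup>2 \<le> \<tau> * c" using q2 q3 by linarith
  moreover have "\<tau> * c > 0" using assms by simp
  ultimately show ?thesis by linarith
qed

lemma perturb:
  fixes A :: "real^'n^'m"
  assumes p: "p > 1" and E: "E > 0" and bd: "psum p x = E" and xi: "x $ i = 0"
    and opt: "\<forall>z. psum p z \<le> E \<longrightarrow> norm (A *v x - y) \<le> norm (A *v z - y)"
  shows "column i A \<bullet> (A *v x - y) = 0"
proof (rule ccontr)
  define a where "a = column i A"
  define w where "w = A *v x"
  define r where "r = A *v x - y"
  define c where "c = a \<bullet> r"
  assume "column i A \<bullet> (A *v x - y) \<noteq> 0"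
  then have c0: "c \<noteq> 0" unfolding c_def a_def r_def .
  define B where "B = norm w + norm a"
  define K where "K = 2 * norm r * B / E + (norm a + B / E)\<^sup>2"
  define \<epsilon> where "\<epsilon> = min 1 (\<bar>c\<bar> / (K + 1))"
  define \<tau> where "\<tau> = min \<epsilon> (\<epsilon> powr (1 / (p - 1)))"
  have K0: "K \<ge> 0" unfolding K_def B_def using E by auto
  have eps0: "\<epsilon> > 0" "\<epsilon> \<le> 1" unfolding \<epsilon>_def using c0 K0 by auto
  have epsK: "\<epsilon> * K \<le> \<bar>c\<bar>"
  proof -
    have "\<epsilon> * K \<le> (\<bar>c\<bar> / (K + 1)) * K" unfolding \<epsilon>_def using K0 by (intro mult_right_mono) auto
    also have "\<dots> \<le> \<bar>c\<bar>" using K0 by (simp add: field_simps)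
    finally show ?thesis .
  qed
  have tau0: "\<tau> > 0" "\<tau> \<le> \<epsilon>" unfolding \<tau>_def using eps0 by auto
  have taup: "\<tau> powr (p - 1) \<le> \<epsilon>"
  proof -
    have "\<tau> powr (p - 1) \<le> (\<epsilon> powr (1 / (p - 1))) powr (p - 1)"
      unfolding \<tau>_def using tau0 p by (intro powr_mono2) auto
    also have "\<dots> = \<epsilon>" using p eps0 by (simp add: powr_powr)
    finally show ?thesis .
  qed
  define t where "t = - sgn c * \<tau>"
  have tabs: "\<bar>t\<bar> = \<tau>" using tau0 c0 unfolding t_def by (cases "c > 0") (auto simp: abs_mult)
  have tc: "t * c = - \<tau> * \<bar>c\<bar>" unfolding t_def by (simp add: abs_sgn mult.commute mult.left_commute)
  define q where "q = \<tau> powr p"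
  have q0: "q > 0" unfolding q_def using tau0 by simp
  define s where "s = (E / (E + q)) powr (1 / p)"
  define \<delta> where "\<delta> = q / E"
  have s0: "s > 0" unfolding s_def using E q0 by simp
  have s1: "s \<le> 1" unfolding s_def using E q0 p by (intro powr_le1) auto
  have sp: "s powr p = E / (E + q)" unfolding s_def using E q0 p by (simp add: powr_powr)
  have "s \<ge> s powr p" using s0 s1 p by (simp add: powr_le_one_le)
  moreover have "E / (E + q) \<ge> 1 - \<delta>" unfolding \<delta>_def using E q0 by (simp add: field_simps)
  ultimately have s1d: "1 - s \<le> \<delta>" using sp by linarith
  have delta_bd: "\<delta> \<le> \<tau> * \<epsilon> / E"
  proof -
    have "q = \<tau> * \<tau> powr (p - 1)" unfolding q_def using tau0 p
      by (simp add: powr_diff powr_one)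
    also have "\<dots> \<le> \<tau> * \<epsilon>" using taup tau0 by (intro mult_left_mono) auto
    finally show ?thesis unfolding \<delta>_def using E by (simp add: divide_right_mono)
  qed
  define z where "z = s *\<^sub>R (x + t *\<^sub>R axis i 1)"
  have "psum p z = s powr p * (E + \<tau> powr p)"
    unfolding z_def using s0 by (simp add: psum_scale psum_add_axis[OF xi] bd tabs)
  also have "\<dots> = E"
  proof -
    have "E + \<tau> powr p > 0" using E q0 unfolding q_def by linarith
    then show ?thesis using sp unfolding q_def by simp
  qed
  finally have "norm r \<le> norm (A *v z - y)" using opt unfolding r_def by simp
  moreover define u where "u = t *\<^sub>R a + (s - 1) *\<^sub>R (w + t *\<^sub>R a)"
  moreover have "A *v z - y = r + u"
    unfolding z_def u_def r_def w_def a_def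
    by (simp add: matrix_vector_mult_scaleR matrix_vector_right_distrib matrix_vector_mult_basis algebra_simps)
  ultimately have nle: "norm r \<le> norm (r + u)" by simp
  have "(norm (r + u))\<^sup>2 = (norm r)\<^sup>2 + 2 * (r \<bullet> u) + (norm u)\<^sup>2"
    by (simp add: power2_norm_eq_inner inner_add_left inner_add_right inner_commute)
  moreover have "(norm r)\<^sup>2 \<le> (norm (r + u))\<^sup>2" using nle by (intro power_mono) auto
  ultimately have main: "0 \<le> 2 * (r \<bullet> u) + (norm u)\<^sup>2" by linarith
  have wta: "norm (w + t *\<^sub>R a) \<le> B"
  proof -
    have "norm (w + t *\<^sub>R a) \<le> norm w + \<tau> * norm a" using norm_triangle_ineq[of w "t *\<^sub>R a"] tabs by simp
    also have "\<dots> \<le> norm w + norm a" using tau0 eps0 by (intro add_left_mono mult_left_le_one_le) auto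
    finally show ?thesis unfolding B_def .
  qed
  have ru: "r \<bullet> u = t * c + (s - 1) * (r \<bullet> (w + t *\<^sub>R a))"
    unfolding u_def c_def by (simp add: inner_add_right inner_commute)
  have "(s - 1) * (r \<bullet> (w + t *\<^sub>R a)) \<le> \<bar>s - 1\<bar> * \<bar>r \<bullet> (w + t *\<^sub>R a)\<bar>"
    by (metis abs_ge_self abs_mult)
  also have "\<dots> \<le> \<delta> * (norm r * B)"
  proof (intro mult_mono)
    show "\<bar>s - 1\<bar> \<le> \<delta>" using s1 s1d by simp
    have "\<bar>r \<bullet> (w + t *\<^sub>R a)\<bar> \<le> norm r * norm (w + t *\<^sub>R a)" by (rule Cauchy_Schwarz_ineq2)
    also have "\<dots> \<le> norm r * B" using wta by (intro mult_left_mono) auto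
    finally show "\<bar>r \<bullet> (w + t *\<^sub>R a)\<bar> \<le> norm r * B" .
  qed (use q0 E in \<open>auto simp: \<delta>_def\<close>)
  finally have ru2: "r \<bullet> u \<le> - \<tau> * \<bar>c\<bar> + \<delta> * norm r * B" using ru tc by simp
  have nu: "norm u \<le> \<tau> * norm a + \<delta> * B"
  proof -
    have "norm u \<le> norm (t *\<^sub>R a) + norm ((s - 1) *\<^sub>R (w + t *\<^sub>R a))"
      unfolding u_def by (rule norm_triangle_ineq)
    also have "\<dots> = \<tau> * norm a + \<bar>s - 1\<bar> * norm (w + t *\<^sub>R a)" using tabs by simp
    also have "\<dots> \<le> \<tau> * norm a + \<delta> * B"
      using s1 s1d wta q0 E by (intro add_left_mono mult_mono) (auto simp: \<delta>_def)
    finally show ?thesis .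
  qed
  have "(norm u)\<^sup>2 \<le> (\<tau> * norm a + \<delta> * B)\<^sup>2" using nu by (intro power_mono) auto
  with main ru2 have "0 \<le> - 2 * \<tau> * \<bar>c\<bar> + 2 * \<delta> * norm r * B + (\<tau> * norm a + \<delta> * B)\<^sup>2"
    by linarith
  moreover have "- 2 * \<tau> * \<bar>c\<bar> + 2 * \<delta> * norm r * B + (\<tau> * norm a + \<delta> * B)\<^sup>2 < 0"
    using c0 tau0 q0 E delta_bd eps0 epsK
    by (intro key_ineq[where \<epsilon>=\<epsilon> and E=E]) (auto simp: \<delta>_def B_def K_def)
  ultimately show False by linarith
qed



lemma ennreal_bound_zero:
  fixes m b :: ennreal
  assumes "b < top" "\<And>n::nat. n \<ge> 1 \<Longrightarrow> of_nat n * m \<le> b"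
  shows "m = 0"
proof (rule ccontr)
  assume m0: "m \<noteq> 0"
  have "m \<le> b" using assms(2)[of 1] by simp
  then have mt: "m < top" using assms(1) by (meson le_less_trans)
  obtain x where x: "m = ennreal x" "x \<ge> 0" using mt by (cases m) auto
  obtain y where y: "b = ennreal y" "y \<ge> 0" using assms(1) by (cases b) auto
  have xp: "x > 0" using m0 x by (auto simp: less_le)
  obtain n :: nat where n: "y / x < n" using reals_Archimedean2 by blast
  have "y / x \<ge> 0" using xp y by simp
  then have n1: "n \<ge> 1" using n by (cases n) auto
  have "ennreal (real n * x) \<le> ennreal y"
    using assms(2)[OF n1] x y by (simp add: ennreal_mult ennreal_of_nat_eq_real_of_nat)
  then have "real n * x \<le> y" using y by (simp add: ennreal_le_iff)
  moreover have "y < real n * x" using n xp by (simp add: field_simps)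
  ultimately show False by linarith
qed

lemma lines_null:
  fixes S :: "'a::euclidean_space set"
  assumes Sb: "S \<in> sets borel" and w: "w \<noteq> 0"
    and line: "\<And>q t. q \<in> S \<Longrightarrow> q + t *\<^sub>R w \<in> S \<Longrightarrow> t = 0"
  shows "S \<in> null_sets lborel"
proof -
  have part: "S \<inter> ball 0 (real M) \<in> null_sets lborel" for M :: nat
  proof -
    define SM where "SM = S \<inter> ball 0 (real M)"
    have SMb: "SM \<in> sets borel" unfolding SM_def using Sb by auto
    define C where "C = ball (0::'a) (real M + norm w)"
    have Cfin: "emeasure lborel C < top" unfolding C_def using emeasure_bounded_finite[of "ball (0::'a) (real M + norm w)"] by simp
    have tr: "emeasure lborel ((+) c -` SM) = emeasure lborel SM" for c :: 'a
    proof -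
      have meas: "(+) c \<in> measurable lborel borel" by measurable
      have "emeasure (distr lborel borel ((+) c)) SM = emeasure lborel ((+) c -` SM \<inter> space lborel)"
        by (rule emeasure_distr[OF meas SMb])
      then show ?thesis by (simp add: lborel_distr_plus)
    qed
    have trm: "(+) c -` SM \<in> sets lborel" for c :: 'a
    proof -
      have meas: "(+) c \<in> measurable lborel borel" by measurable
      show ?thesis using measurable_sets[OF meas SMb] by simp
    qed
    have "of_nat n * emeasure lborel SM \<le> emeasure lborel C" if n1: "n \<ge> 1" for n :: nat
    proof -
      define P where "P k = (+) ((real k / real n) *\<^sub>R w) -` SM" for k :: nat
      have disj: "disjoint_family_on P {..<n}"
        unfolding disjoint_family_on_def
      proof (intro ballI impI)
        fix k l assume k: "k \<in> {..<n}" and l: "l \<in> {..<n}" and kl: "k \<noteq> l"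
        show "P k \<inter> P l = {}"
        proof (rule ccontr)
          assume "P k \<inter> P l \<noteq> {}"
          then obtain q where q: "(real k / real n) *\<^sub>R w + q \<in> S" "(real l / real n) *\<^sub>R w + q \<in> S"
            unfolding P_def SM_def by auto
          have "(real k / real n) *\<^sub>R w + q + ((real l - real k) / real n) *\<^sub>R w
              = (real l / real n) *\<^sub>R w + q"
            by (simp add: algebra_simps diff_divide_distrib)
          then have "(real l - real k) / real n = 0" using line[OF q(1)] q(2) by metis
          then show False using kl n1 by simp
        qed
      qed
      have sub: "(\<Union>k\<in>{..<n}. P k) \<subseteq> C"
      proof
        fix q assume "q \<in> (\<Union>k\<in>{..<n}. P k)"
        then obtain k where k: "k < n" "(real k / real n) *\<^sub>R w + q \<in> SM" unfolding P_def by auto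
        then have h1: "norm ((real k / real n) *\<^sub>R w + q) < real M" unfolding SM_def by auto
        have h2: "norm ((real k / real n) *\<^sub>R w) \<le> norm w"
        proof -
          have "real k / real n \<le> 1" using k by simp
          then have "(real k / real n) * norm w \<le> 1 * norm w" by (intro mult_right_mono) auto
          then show ?thesis by simp
        qed
        have "norm q \<le> norm ((real k / real n) *\<^sub>R w + q) + norm ((real k / real n) *\<^sub>R w)"
          by (metis add_diff_cancel_left' norm_triangle_ineq4 add.commute)
        then show "q \<in> C" unfolding C_def using h1 h2 by simp
      qed
      have "of_nat n * emeasure lborel SM = (\<Sum>k\<in>{..<n}. emeasure lborel (P k))"
        unfolding P_def by (simp add: tr)
      also have "\<dots> = emeasure lborel (\<Union>k\<in>{..<n}. P k)"
        using disj trm unfolding P_def by (intro sum_emeasure) auto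
      also have "\<dots> \<le> emeasure lborel C"
        using sub by (intro emeasure_mono) (auto simp: C_def)
      finally show ?thesis .
    qed
    then have "emeasure lborel SM = 0" using Cfin by (intro ennreal_bound_zero) auto
    then show ?thesis unfolding SM_def using SMb by (auto simp: SM_def)
  qed
  have "S = (\<Union>M::nat. S \<inter> ball 0 (real M))"
  proof safe
    fix q assume "q \<in> S"
    obtain M :: nat where "norm q < M" using reals_Archimedean2 by blast
    then show "q \<in> (\<Union>M::nat. S \<inter> ball 0 (real M))" using \<open>q \<in> S\<close> by auto
  qed
  then show ?thesis using part by (metis null_sets_UN)
qed



lemma cont_mv:
  fixes f :: "'a::topological_space \<Rightarrow> real^'n^'m" and g :: "'a \<Rightarrow> real^'n"
  assumes "continuous_on S f" "continuous_on S g"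
  shows "continuous_on S (\<lambda>q. f q *v g q)"
  unfolding matrix_vector_mult_def
  by (intro continuous_on_vec_lambda continuous_on_sum continuous_on_mult
      continuous_on_component assms)

definition Tset :: "real \<Rightarrow> real \<Rightarrow> 'n \<Rightarrow> 'm \<Rightarrow> nat \<Rightarrow> ((real^'n) \<times> ((real^'n^'m) \<times> (real^'m))) set" where
  "Tset p E i j k = {q. fst q $ i = 0 \<and>
     (\<forall>z. psum p z \<le> E \<and> z $ i = 0 \<longrightarrow>
        norm (fst (snd q) *v fst q - snd (snd q)) \<le> norm (fst (snd q) *v z - snd (snd q))) \<and>
     column i (fst (snd q)) \<bullet> (fst (snd q) *v fst q - snd (snd q)) = 0 \<and>
     inverse (real (Suc k)) \<le> \<bar>(fst (snd q) *v fst q - snd (snd q)) $ j\<bar>}"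

definition Sset :: "real \<Rightarrow> real \<Rightarrow> 'n \<Rightarrow> 'm \<Rightarrow> nat \<Rightarrow> ((real^'n^'m) \<times> (real^'m)) set" where
  "Sset p E i j k = {Ay. \<exists>x. x \<in> {x. psum p x \<le> E} \<and> (x, Ay) \<in> Tset p E i j k}"

lemma closed_Tset:
  fixes i :: "'n::finite" and j :: "'m::finite"
  shows "closed (Tset p E i j k)"
proof -
  have c1: "continuous_on UNIV (\<lambda>q::(real^'n) \<times> ((real^'n^'m) \<times> (real^'m)). fst (snd q) *v fst q - snd (snd q))"
    by (intro continuous_on_diff cont_mv continuous_intros)
  have c2: "continuous_on UNIV (\<lambda>q::(real^'n) \<times> ((real^'n^'m) \<times> (real^'m)). fst (snd q) *v z - snd (snd q))" for z
    by (intro continuous_on_diff cont_mv continuous_intros)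
  have c3: "continuous_on UNIV (\<lambda>q::(real^'n) \<times> ((real^'n^'m) \<times> (real^'m)). column i (fst (snd q)))"
    unfolding column_def by (intro continuous_intros)
  show ?thesis
    unfolding Tset_def
    apply (intro closed_Collect_conj closed_Collect_all closed_Collect_imp closed_Collect_eq closed_Collect_le)
    using c1 c2 c3
    by (auto intro!: cont_mv continuous_intros continuous_on_component
        simp: continuous_on_inner)
qed



lemma Sset_borel:
  fixes i :: "'n::finite" and j :: "'m::finite"
  assumes p: "p > 0"
  shows "Sset p E i j k \<in> sets borel"
proof -
  have "closed (Sset p E i j k)"
    unfolding Sset_def
    by (rule closed_compact_projection[OF compact_psum_ball[OF p] closed_Tset])
  then show ?thesis by (rule borel_closed)
qed

lemma mv_pert:
  fixes A :: "real^'n^'m" and z :: "real^'n"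
  shows "(A + t *\<^sub>R (axis j (axis i 1))) *v z = A *v z + (t * z $ i) *\<^sub>R axis j 1"
  by (simp add: vec_eq_iff matrix_vector_mult_def axis_def algebra_simps sum.distrib
      if_distrib[of "\<lambda>x. x * _"] if_distrib[of "\<lambda>x. _ * x"] sum_distrib_left[symmetric] cong: if_cong)

lemma col_pert:
  fixes A :: "real^'n^'m"
  shows "column i (A + t *\<^sub>R (axis j (axis i 1))) = column i A + t *\<^sub>R axis j 1"
  by (simp add: vec_eq_iff column_def axis_def)

lemma Sset_null:
  fixes i :: "'n::finite" and j :: "'m::finite"
  assumes p: "p > 1"
  shows "Sset p E i j k \<in> null_sets lborel"
proof (rule lines_null[where w = "(axis j (axis i (1::real)), 0)"])
  show "Sset p E i j k \<in> sets borel" using p by (intro Sset_borel) auto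
  show "(axis j (axis i (1::real)), 0::real^'m) \<noteq> 0"
    by (simp add: axis_eq_0_iff zero_prod_def)
  fix q :: "(real^'n^'m) \<times> (real^'m)" and t :: real
  assume q1: "q \<in> Sset p E i j k" and q2: "q + t *\<^sub>R (axis j (axis i 1), 0) \<in> Sset p E i j k"
  obtain A y where qAy: "q = (A, y)" by (cases q)
  define A' where "A' = A + t *\<^sub>R (axis j (axis i 1))"
  have q2': "(A', y) \<in> Sset p E i j k" using q2 unfolding qAy A'_def by simp
  obtain x where x: "psum p x \<le> E" "x $ i = 0"
    "\<forall>z. psum p z \<le> E \<and> z $ i = 0 \<longrightarrow> norm (A *v x - y) \<le> norm (A *v z - y)"
    "column i A \<bullet> (A *v x - y) = 0"
    "inverse (real (Suc k)) \<le> \<bar>(A *v x - y) $ j\<bar>"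
    using q1 unfolding qAy Sset_def Tset_def by auto
  obtain x' where x': "psum p x' \<le> E" "x' $ i = 0"
    "\<forall>z. psum p z \<le> E \<and> z $ i = 0 \<longrightarrow> norm (A' *v x' - y) \<le> norm (A' *v z - y)"
    "column i A' \<bullet> (A' *v x' - y) = 0"
    using q2' unfolding Sset_def Tset_def by auto
  have eqA: "A' *v z = A *v z" if "z $ i = 0" for z
    using that unfolding A'_def by (simp add: mv_pert)
  define Q where "Q = {z. psum p z \<le> E \<and> z $ i = 0}"
  have "A *v x = A *v x'"
  proof (rule res_unique[where Q = Q])
    fix a b assume "a \<in> Q" "b \<in> Q"
    then show "(1/2) *\<^sub>R (a + b) \<in> Q"
      using psum_mid(1)[OF p, of a b] unfolding Q_def by auto
  next
    show "x \<in> Q" "x' \<in> Q" using x x' unfolding Q_def by auto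
    show "\<forall>z\<in>Q. norm (A *v x - y) \<le> norm (A *v z - y)" using x(3) unfolding Q_def by auto
    show "\<forall>z\<in>Q. norm (A *v x' - y) \<le> norm (A *v z - y)"
      using x'(3) eqA x'(2) unfolding Q_def by auto
  qed
  then have rr: "A' *v x' - y = A *v x - y" using eqA[OF x'(2)] by simp
  define r where "r = A *v x - y"
  have "column i A' \<bullet> r = column i A \<bullet> r + t * r $ j"
    unfolding A'_def col_pert by (simp add: inner_add_left inner_axis')
  then have "t * r $ j = 0" using x(4) x'(4) rr unfolding r_def by simp
  moreover have "r $ j \<noteq> 0"
  proof -
    have "inverse (real (Suc k)) > 0" by simp
    then show ?thesis using x(5) unfolding r_def by linarith
  qed
  ultimately show "t = 0" by simp
qed



lemma opt_iff:
  assumes "p > 0" "\<eta> > 0"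
  shows "constr_opt p \<eta> A y x \<longleftrightarrow> psum p x \<le> \<eta> powr p \<and>
     (\<forall>z. psum p z \<le> \<eta> powr p \<longrightarrow> norm (A *v x - y) \<le> norm (A *v z - y))"
  unfolding constr_opt_def by (simp add: pnorm_le_iff[OF assms])

lemma pointwise:
  fixes A :: "real^'n^'m" and p \<eta> :: real
  assumes p: "p > 1" and eta: "\<eta> > 0"
    and rng: "y \<in> range (\<lambda>x. A *v x)" and inf: "\<eta> < Inf {pnorm p x | x :: real^'n. A *v x = y}"
  shows "\<exists>!x. constr_opt p \<eta> A y x"
    and "constr_opt p \<eta> A y x \<Longrightarrow> x $ i = 0 \<Longrightarrow> (A, y) \<in> (\<Union>j. \<Union>k. Sset p (\<eta> powr p) i j k)"
proof -
  define E where "E = \<eta> powr p"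
  have E0: "E > 0" unfolding E_def using eta by simp
  have p0: "p > 0" using p by simp
  obtain x0 where x0: "y = A *v x0" using rng by auto
  define K where "K = {x :: real^'n. psum p x \<le> E}"
  have opt: "constr_opt p \<eta> A y x \<longleftrightarrow> x \<in> K \<and> (\<forall>z\<in>K. norm (A *v x - y) \<le> norm (A *v z - y))" for x
    unfolding opt_iff[OF p0 eta] K_def E_def by auto
  have ne: "A *v x \<noteq> y" if "x \<in> K" for x
  proof
    assume ax: "A *v x = y"
    have "Inf {pnorm p x | x :: real^'n. A *v x = y} \<le> pnorm p x"
    proof (rule cInf_lower)
      show "pnorm p x \<in> {pnorm p x | x :: real^'n. A *v x = y}" using ax by auto
      show "bdd_below {pnorm p x | x :: real^'n. A *v x = y}"
        by (rule bdd_belowI[of _ 0]) (auto simp: pnorm_def)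
    qed
    moreover have "pnorm p x \<le> \<eta>" using that unfolding K_def E_def by (simp add: pnorm_le_iff[OF p0 eta])
    ultimately show False using inf by linarith
  qed
  have bd: "psum p x = E" if "constr_opt p \<eta> A y x" for x
  proof (rule ccontr)
    assume "psum p x \<noteq> E"
    then have "psum p x < E" using that opt unfolding K_def by force
    then show False
      using boundary[OF p0 x0, of x E] that opt ne unfolding K_def by blast
  qed
  have Kmid: "(1/2) *\<^sub>R (a + b) \<in> K" if "a \<in> K" "b \<in> K" for a b
    using psum_mid(1)[OF p, of a b] that unfolding K_def by auto
  show "\<exists>!x. constr_opt p \<eta> A y x"
  proof -
    have "\<exists>x\<in>K. \<forall>z\<in>K. norm (A *v x - y) \<le> norm (A *v z - y)"
    proof (rule continuous_attains_inf)
      show "compact K" unfolding K_def by (rule compact_psum_ball[OF p0])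
      have "0 \<in> K" unfolding K_def psum_def using E0 by simp
      then show "K \<noteq> {}" by blast
      show "continuous_on K (\<lambda>z. norm (A *v z - y))"
        by (intro continuous_on_norm continuous_on_diff cont_mv continuous_intros)
    qed
    then obtain x where x: "constr_opt p \<eta> A y x" using opt by blast
    moreover have "x' = x" if x': "constr_opt p \<eta> A y x'" for x'
    proof (rule ccontr)
      assume neq: "x' \<noteq> x"
      have xK: "x \<in> K" "x' \<in> K" using x x' opt by auto
      have eq: "A *v x' = A *v x"
        by (rule res_unique[where Q = K]) (use Kmid xK x x' opt in auto)
      define m where "m = (1/2) *\<^sub>R (x' + x)"
      have "psum p m < (psum p x' + psum p x) / 2"
        unfolding m_def by (rule psum_mid(2)[OF p neq])
      then have mlt: "psum p m < E" using bd[OF x] bd[OF x'] by simp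
      have Am: "A *v m = A *v x"
        unfolding m_def using eq
        by (simp add: matrix_vector_mult_scaleR matrix_vector_right_distrib scaleR_2[symmetric])
      have "\<forall>z. psum p z \<le> E \<longrightarrow> norm (A *v m - y) \<le> norm (A *v z - y)"
        using x opt Am unfolding K_def by auto
      then show False using boundary[OF p0 x0 mlt] ne[OF xK(1)] Am by auto
    qed
    ultimately show ?thesis by blast
  qed
  assume xo: "constr_opt p \<eta> A y x" and xi: "x $ i = 0"
  have xK: "x \<in> K" using xo opt by auto
  have col: "column i A \<bullet> (A *v x - y) = 0"
    using perturb[OF p E0 bd[OF xo] xi] xo opt unfolding K_def by auto
  have "A *v x - y \<noteq> 0" using ne[OF xK] by simp
  then obtain j where j: "(A *v x - y) $ j \<noteq> 0" by (metis vec_eq_iff zero_index)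
  then obtain k where k: "inverse (real (Suc k)) < \<bar>(A *v x - y) $ j\<bar>"
    using reals_Archimedean[of "\<bar>(A *v x - y) $ j\<bar>"] by auto
  have "(A, y) \<in> Sset p E i j k"
    unfolding Sset_def Tset_def using xK xi col k xo opt unfolding K_def by auto
  then show "(A, y) \<in> (\<Union>j. \<Union>k. Sset p (\<eta> powr p) i j k)" unfolding E_def by blast
qed



theorem theorem4p5:
  fixes p \<eta> :: real
  assumes "p > 1" and "CARD('m::finite) \<le> CARD('n::finite)" and "\<eta> > 0"
  shows "AE Ay in (lborel :: ((real ^ 'n ^ 'm) \<times> (real ^ 'm)) measure).
           (snd Ay \<in> range (\<lambda>x. fst Ay *v x) \<and>
            \<eta> < Inf {pnorm p x | x :: real ^ 'n. fst Ay *v x = snd Ay})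
           \<longrightarrow> (\<exists>!x. constr_opt p \<eta> (fst Ay) (snd Ay) x) \<and>
               (\<forall>x. constr_opt p \<eta> (fst Ay) (snd Ay) x \<longrightarrow> card (supp x) = CARD('n))"
proof -
  define N where "N = (\<Union>i\<in>(UNIV::'n set). \<Union>j\<in>(UNIV::'m set). \<Union>k. Sset p (\<eta> powr p) i j k)"
  have k: "(\<Union>k. Sset p (\<eta> powr p) i j k) \<in> null_sets lborel" for i :: 'n and j :: 'm
    using Sset_null[OF assms(1)] by blast
  have ij: "(\<Union>j\<in>(UNIV::'m set). \<Union>k. Sset p (\<eta> powr p) i j k) \<in> null_sets lborel" for i :: 'n
    by (rule null_sets_UN') (auto intro: k countable_finite)
  have Nnull: "N \<in> null_sets lborel"
    unfolding N_def by (rule null_sets_UN') (auto intro: ij countable_finite)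
  have sub: "{Ay \<in> space lborel. \<not> ((snd Ay \<in> range (\<lambda>x. fst Ay *v x) \<and>
            \<eta> < Inf {pnorm p x | x :: real ^ 'n. fst Ay *v x = snd Ay})
           \<longrightarrow> (\<exists>!x. constr_opt p \<eta> (fst Ay) (snd Ay) x) \<and>
               (\<forall>x. constr_opt p \<eta> (fst Ay) (snd Ay) x \<longrightarrow> card (supp x) = CARD('n)))} \<subseteq> N"
  proof (rule subsetI)
    fix Ay :: "(real ^ 'n ^ 'm) \<times> (real ^ 'm)"
    assume "Ay \<in> {Ay \<in> space lborel. \<not> ((snd Ay \<in> range (\<lambda>x. fst Ay *v x) \<and>
            \<eta> < Inf {pnorm p x | x :: real ^ 'n. fst Ay *v x = snd Ay})
           \<longrightarrow> (\<exists>!x. constr_opt p \<eta> (fst Ay) (snd Ay) x) \<and>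
               (\<forall>x. constr_opt p \<eta> (fst Ay) (snd Ay) x \<longrightarrow> card (supp x) = CARD('n)))}"
    then have r: "snd Ay \<in> range (\<lambda>x. fst Ay *v x)"
      and inf: "\<eta> < Inf {pnorm p x | x :: real ^ 'n. fst Ay *v x = snd Ay}"
      and nc: "\<not> ((\<exists>!x. constr_opt p \<eta> (fst Ay) (snd Ay) x) \<and>
               (\<forall>x. constr_opt p \<eta> (fst Ay) (snd Ay) x \<longrightarrow> card (supp x) = CARD('n)))"
      by blast+
    note pw = pointwise[OF assms(1,3) r inf]
    from nc pw(1) obtain x where xo: "constr_opt p \<eta> (fst Ay) (snd Ay) x"
      and cx: "card (supp x) \<noteq> CARD('n)"
      by blast
    have "supp x \<noteq> UNIV" using cx by auto
    then obtain i where xi: "x $ i = 0" unfolding supp_def by auto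
    have "(fst Ay, snd Ay) \<in> (\<Union>j. \<Union>k. Sset p (\<eta> powr p) i j k)" by (rule pw(2)[OF xo xi])
    then show "Ay \<in> N" unfolding N_def by auto
  qed
  show ?thesis by (rule AE_I'[OF Nnull sub])
qed


end
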